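(* Let $n\ge1$. If $p\in\mathcal{T}_n$, then $\iota(p)\notin\{1,2\}^n$.
   Context: $\Gamma=\{0,1,2,3\}$. $C=\{(a,b,c)\in\mathbb{R}^3: a\ge b\ge c>0,\ a+b+c=1\}$, $C^*=\{(a,b,c)\in C: a\ne1/2\}$. Regions of $C^*$: $R_0=\{a<1/2\}$, $R_1=\{2a-1\ge2b,\ a>1/2\}$, $R_2=\{2b>2a-1\ge2c,\ a>1/2\}$, $R_3=\{2c>2a-1,\ a>1/2\}$. Sorted pedal map $P:C^*\to C$: $P(a,b,c)=(1-2c,1-2b,1-2a)$ on $R_0$, $(2a-1,2b,2c)$ on $R_1$, $(2b,2a-1,2c)$ on $R_2$, $(2b,2c,2a-1)$ on $R_3$. $\mathcal{T}_n=\{p\in C: P^j(p)\text{ defined for }0\le j<n,\ P^n(p)=p,\ P^d(p)\ne p\text{ for }1\le d<n\}$. The itinerary $\iota(p)=w_0\cdots w_{n-1}\in\Gamma^n$ of $p\in\mathcal{T}_n$ is defined by $P^j(p)\in R_{w_j}$ for $0\le j<n$. *)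

theory Defs
  imports Complex_Main
begin

type_synonym pt = "real \<times> real \<times> real"

definition C :: "pt set" where
  "C = {(a,b,c). a \<ge> b \<and> b \<ge> c \<and> c > 0 \<and> a + b + c = 1}"

definition Cstar :: "pt set" where
  "Cstar = {(a,b,c). (a,b,c) \<in> C \<and> a \<noteq> 1/2}"

definition R0 :: "pt set" where "R0 = {(a,b,c). (a,b,c) \<in> Cstar \<and> a < 1/2}"
definition R1 :: "pt set" where "R1 = {(a,b,c). (a,b,c) \<in> Cstar \<and> 2*a - 1 \<ge> 2*b \<and> a > 1/2}"
definition R2 :: "pt set" where "R2 = {(a,b,c). (a,b,c) \<in> Cstar \<and> 2*b > 2*a - 1 \<and> 2*a - 1 \<ge> 2*c \<and> a > 1/2}"
definition R3 :: "pt set" where "R3 = {(a,b,c). (a,b,c) \<in> Cstar \<and> 2*c > 2*a - 1 \<and> a > 1/2}"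

definition region :: "nat \<Rightarrow> pt set" where
  "region k = (if k = 0 then R0 else if k = 1 then R1 else if k = 2 then R2 else if k = 3 then R3 else {})"

text \<open>Sorted pedal map; its value outside Cstar is irrelevant (arbitrary choice: identity).\<close>
definition P :: "pt \<Rightarrow> pt" where
  "P p = (case p of (a,b,c) \<Rightarrow>
     if p \<in> R0 then (1 - 2*c, 1 - 2*b, 1 - 2*a)
     else if p \<in> R1 then (2*a - 1, 2*b, 2*c)
     else if p \<in> R2 then (2*b, 2*a - 1, 2*c)
     else if p \<in> R3 then (2*b, 2*c, 2*a - 1)
     else p)"

definition T :: "nat \<Rightarrow> pt set" where
  "T n = {p \<in> C. (\<forall>j<n. (P ^^ j) p \<in> Cstar) \<and> (P ^^ n) p = p \<and>
                 (\<forall>d. 1 \<le> d \<and> d < n \<longrightarrow> (P ^^ d) p \<noteq> p)}"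

definition itinerary :: "nat \<Rightarrow> pt \<Rightarrow> nat list" where
  "itinerary n p = (THE w. length w = n \<and> set w \<subseteq> {0,1,2,3} \<and>
                      (\<forall>j<n. (P ^^ j) p \<in> region (w ! j)))"

end

theory Submission
  imports Defs
begin

lemma region_ex:
  assumes "q \<in> Cstar" shows "\<exists>k\<in>{0,1,2,3}. q \<in> region k"
proof -
  obtain a b c where q: "q = (a,b,c)" by (cases q) auto
  show ?thesis using assms unfolding q region_def R0_def R1_def R2_def R3_def Cstar_def
    by (cases "a < 1/2"; cases "2*a - 1 \<ge> 2*b"; cases "2*a - 1 \<ge> 2*c") force+
qed

lemma region_uniq:
  assumes "q \<in> region k" "q \<in> region k'" shows "k = k'"
proof -
  obtain a b c where q: "q = (a,b,c)" by (cases q) auto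
  show ?thesis using assms unfolding q region_def R0_def R1_def R2_def R3_def Cstar_def C_def
    by (auto split: if_splits)
qed

lemma third_double:
  assumes "q \<in> R1 \<or> q \<in> R2" shows "snd (snd (P q)) = 2 * snd (snd q)"
proof -
  obtain a b c where q: "q = (a,b,c)" by (cases q) auto
  have n0: "q \<notin> R0" using assms unfolding q R0_def R1_def R2_def by auto
  show ?thesis
  proof (cases "q \<in> R1")
    case True then show ?thesis using n0 unfolding P_def q by auto
  next
    case False then show ?thesis using n0 assms unfolding P_def q by auto
  qed
qed

theorem mainTheorem6:
  fixes n :: nat and p :: pt
  assumes "n \<ge> 1" and "p \<in> T n"
  shows "itinerary n p \<notin> {w. length w = n \<and> set w \<subseteq> {1,2}}"
proof
  assume H: "itinerary n p \<in> {w. length w = n \<and> set w \<subseteq> {1,2}}"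
  define Q where "Q w = (length w = n \<and> set w \<subseteq> {0,1,2,3} \<and>
                      (\<forall>j<n. (P ^^ j) p \<in> region (w ! j)))" for w
  have cs: "\<forall>j<n. (P ^^ j) p \<in> Cstar" and per: "(P ^^ n) p = p" and pC: "p \<in> C"
    using assms(2) unfolding T_def by auto
  define f where "f j = (SOME k. k \<in> {0,1,2,3} \<and> (P ^^ j) p \<in> region k)" for j
  have f: "f j \<in> {0,1,2,3} \<and> (P ^^ j) p \<in> region (f j)" if "j < n" for j
    unfolding f_def by (rule someI_ex) (use region_ex cs that in blast)
  have ex: "Q (map f [0..<n])" unfolding Q_def
  proof (intro conjI allI impI)
    show "set (map f [0..<n]) \<subseteq> {0, 1, 2, 3}"
    proof
      fix x assume "x \<in> set (map f [0..<n])"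
      then obtain j where "j < n" "x = f j" by auto
      then show "x \<in> {0, 1, 2, 3}" using f[of j] by simp
    qed
  qed (use f in auto)
  have un: "w = map f [0..<n]" if "Q w" for w
  proof (rule nth_equalityI)
    show "length w = length (map f [0..<n])" using that unfolding Q_def by auto
    fix i assume "i < length w"
    then have i: "i < n" using that unfolding Q_def by auto
    have a: "(P ^^ i) p \<in> region (w ! i)" using that i unfolding Q_def by auto
    have b: "(P ^^ i) p \<in> region (f i)" using f[OF i] by simp
    have "w ! i = f i" using region_uniq[OF a b] .
    then show "w ! i = map f [0..<n] ! i" using i by simp
  qed
  have "Q (itinerary n p)"
    unfolding itinerary_def Q_def[symmetric]
    by (rule theI[of Q, OF ex]) (use un in blast)
  then have R12: "(P ^^ j) p \<in> R1 \<or> (P ^^ j) p \<in> R2" if "j < n" for j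
  proof -
    have "itinerary n p ! j \<in> {1,2}" using H that by (auto simp: nth_mem subset_iff)
    moreover have "(P ^^ j) p \<in> region (itinerary n p ! j)"
      using \<open>Q (itinerary n p)\<close> that unfolding Q_def by blast
    ultimately show ?thesis unfolding region_def by auto
  qed
  have pw: "snd (snd ((P ^^ j) p)) = 2 ^ j * snd (snd p)" if "j \<le> n" for j
    using that
  proof (induction j)
    case 0 then show ?case by simp
  next
    case (Suc j)
    then have "snd (snd ((P ^^ Suc j) p)) = 2 * snd (snd ((P ^^ j) p))"
      using third_double[OF R12[of j]] by simp
    then show ?case using Suc by simp
  qed
  have cpos: "snd (snd p) > 0" using pC unfolding C_def by auto
  have "snd (snd p) = 2 ^ n * snd (snd p)" using pw[of n] per by simp
  then have "1 * snd (snd p) = 2 ^ n * snd (snd p)" by simp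
  then have e: "(2::real) ^ n = 1" using cpos by (metis mult_cancel_right less_irrefl)
  have "(2::real) ^ 1 \<le> 2 ^ n" by (rule power_increasing) (use assms(1) in auto)
  then show False using e by simp
qed

end
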